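(* Let $X,Y$ be nonempty compact Hausdorff spaces, $E\neq\{0_E\}$ a complex locally convex space, and $T:C(X,E)\to C(Y,E)$ a map with $\operatorname{Ran}(TF-TG)\subset\operatorname{Ran}(F-G)$ for all $F,G\in C(X,E)$ and $T(1\otimes 0_E)=1\otimes 0_E$. Then $\tilde T_u=\tilde T_v$ for all $u,v\in E\setminus\{0_E\}$.
   Context: $C(X,E)$ is the vector space of continuous functions $X\to E$; $\operatorname{Ran}(F)=\{F(x):x\in X\}$; $f\otimes u$ denotes $x\mapsto f(x)u$, and $1\otimes 0_E$ is the constant function $0_E$. For $u\in E\setminus\{0_E\}$, $\tilde T_u:C(X)\to C(Y)$ is defined by: $\tilde T_u f$ is the unique function $Y\to\mathbb{C}$ with $T(f\otimes u)(y)=(\tilde T_uf)(y)u$ for all $y\in Y$ (it exists since $\operatorname{Ran}(T(f\otimes u))\subset\operatorname{Ran}(f)u$, and it is continuous). *)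

theory Defs
  imports "HOL-Analysis.Analysis"
begin

definition cseminorm :: "(complex \<Rightarrow> 'e::ab_group_add \<Rightarrow> 'e) \<Rightarrow> ('e \<Rightarrow> real) \<Rightarrow> bool" where
  "cseminorm sc p \<longleftrightarrow> (\<forall>x. 0 \<le> p x) \<and> (\<forall>c x. p (sc c x) = cmod c * p x)
     \<and> (\<forall>x y. p (x + y) \<le> p x + p y)"

definition lc_topology :: "('e::ab_group_add \<Rightarrow> real) set \<Rightarrow> 'e topology" where
  "lc_topology P = topology_generated_by {{y. p (y - x) < r} | p x r. p \<in> P \<and> r > 0}"

text \<open>A (Hausdorff) complex locally convex space: a complex vector space together with a
  separating family of seminorms, topologised by lc_topology.\<close>
definition locally_convex :: "(complex \<Rightarrow> 'e::ab_group_add \<Rightarrow> 'e) \<Rightarrow> ('e \<Rightarrow> real) set \<Rightarrow> bool" where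
  "locally_convex sc P \<longleftrightarrow> Vector_Spaces.vector_space sc
     \<and> (\<forall>p\<in>P. cseminorm sc p) \<and> (\<forall>x. x \<noteq> 0 \<longrightarrow> (\<exists>p\<in>P. p x \<noteq> 0))"

definition Ran :: "'a topology \<Rightarrow> ('a \<Rightarrow> 'e) \<Rightarrow> 'e set" where
  "Ran X F = F ` topspace X"

definition Ttilde :: "(complex \<Rightarrow> 'e \<Rightarrow> 'e) \<Rightarrow> (('a \<Rightarrow> 'e) \<Rightarrow> ('b \<Rightarrow> 'e)) \<Rightarrow> 'e
    \<Rightarrow> ('a \<Rightarrow> complex) \<Rightarrow> 'b \<Rightarrow> complex" where
  "Ttilde sc T u f = (\<lambda>y. THE c. T (\<lambda>x. sc (f x) u) y = sc c u)"

end

theory Submission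
  imports Defs
begin

lemma cm_cmult: "continuous_map X euclidean (f::'a\<Rightarrow>complex) \<Longrightarrow> continuous_map X euclidean (\<lambda>x. c * f x)"
  by (simp add: continuous_map_atin tendsto_mult)
lemma cm_ofreal: "continuous_map X euclidean (w::'a\<Rightarrow>real) \<Longrightarrow> continuous_map X euclidean (\<lambda>x. complex_of_real (w x))"
  by (simp add: continuous_map_atin tendsto_of_real)
lemma cm_Re: "continuous_map X euclidean (f::'a\<Rightarrow>complex) \<Longrightarrow> continuous_map X euclidean (\<lambda>x. Re (f x))"
  by (simp add: continuous_map_atin tendsto_Re)
lemma cm_Im: "continuous_map X euclidean (f::'a\<Rightarrow>complex) \<Longrightarrow> continuous_map X euclidean (\<lambda>x. Im (f x))"
  by (simp add: continuous_map_atin tendsto_Im)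

lemma indep_zero:
  fixes \<alpha> \<beta> :: complex and s t :: real
  assumes "Im (\<alpha> * cnj \<beta>) \<noteq> 0" "\<alpha> * s + \<beta> * t = 0"
  shows "s = 0"
proof -
  have r: "Re \<alpha> * s + Re \<beta> * t = 0" and i: "Im \<alpha> * s + Im \<beta> * t = 0"
    using arg_cong[OF assms(2), of Re] arg_cong[OF assms(2), of Im] by simp_all
  have "s * Im (\<alpha> * cnj \<beta>) = Re \<beta> * (Im \<alpha> * s + Im \<beta> * t) - Im \<beta> * (Re \<alpha> * s + Re \<beta> * t)"
    by (simp add: algebra_simps)
  also have "\<dots> = 0" using r i by simp
  finally show ?thesis using assms(1) by simp
qed

locale rd =
  fixes X :: "'a topology" and \<phi> :: "('a \<Rightarrow> complex) \<Rightarrow> complex"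
  assumes RD: "\<And>f g. continuous_map X euclidean f \<Longrightarrow> continuous_map X euclidean g \<Longrightarrow>
      \<exists>x\<in>topspace X. \<phi> f - \<phi> g = f x - g x"
    and Z: "\<And>f. continuous_map X euclidean f \<Longrightarrow> \<exists>x\<in>topspace X. \<phi> f = f x"
begin

lemma oblique:
  fixes a b :: "'a \<Rightarrow> real" and \<alpha> \<beta> :: complex
  assumes ca: "continuous_map X euclidean a" and cb: "continuous_map X euclidean b"
    and ind: "Im (\<alpha> * cnj \<beta>) \<noteq> 0"
    and z: "\<phi> (\<lambda>x. \<alpha> * a x + \<beta> * b x) = 0"
  shows "\<phi> (\<lambda>x. \<alpha> * a x) = 0"
proof -
  have c1: "continuous_map X euclidean (\<lambda>x. \<alpha> * a x)" by (intro cm_cmult cm_ofreal ca)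
  have c2: "continuous_map X euclidean (\<lambda>x. \<beta> * b x)" by (intro cm_cmult cm_ofreal cb)
  have c3: "continuous_map X euclidean (\<lambda>x. \<alpha> * a x + \<beta> * b x)" by (intro continuous_map_add c1 c2)
  obtain x1 where "\<phi> (\<lambda>x. \<alpha> * a x) = \<alpha> * a x1" using Z[OF c1] by auto
  moreover obtain x2 where "\<phi> (\<lambda>x. \<alpha> * a x) - \<phi> (\<lambda>x. \<alpha> * a x + \<beta> * b x) = \<alpha> * a x2 - (\<alpha> * a x2 + \<beta> * b x2)"
    using RD[OF c1 c3] by auto
  ultimately have "\<alpha> * a x1 + \<beta> * b x2 = 0" using z by (simp add: algebra_simps)
  hence "a x1 = 0" using indep_zero[OF ind] by blast
  thus ?thesis using \<open>\<phi> (\<lambda>x. \<alpha> * a x) = \<alpha> * a x1\<close> by simp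
qed

lemma linesum:
  fixes a b :: "'a \<Rightarrow> real" and \<alpha> \<beta> :: complex
  assumes ca: "continuous_map X euclidean a" and cb: "continuous_map X euclidean b"
    and ind: "Im (\<alpha> * cnj \<beta>) \<noteq> 0"
    and za: "\<phi> (\<lambda>x. \<alpha> * a x) = 0" and zb: "\<phi> (\<lambda>x. \<beta> * b x) = 0"
  shows "\<phi> (\<lambda>x. \<alpha> * a x + \<beta> * b x) = 0"
proof -
  have c1: "continuous_map X euclidean (\<lambda>x. \<alpha> * a x)" by (intro cm_cmult cm_ofreal ca)
  have c2: "continuous_map X euclidean (\<lambda>x. \<beta> * b x)" by (intro cm_cmult cm_ofreal cb)
  have c3: "continuous_map X euclidean (\<lambda>x. \<alpha> * a x + \<beta> * b x)" by (intro continuous_map_add c1 c2)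
  obtain x1 where e1: "\<phi> (\<lambda>x. \<alpha> * a x + \<beta> * b x) - \<phi> (\<lambda>x. \<alpha> * a x) = (\<alpha> * a x1 + \<beta> * b x1) - \<alpha> * a x1"
    using RD[OF c3 c1] by auto
  obtain x2 where e2: "\<phi> (\<lambda>x. \<alpha> * a x + \<beta> * b x) - \<phi> (\<lambda>x. \<beta> * b x) = (\<alpha> * a x2 + \<beta> * b x2) - \<beta> * b x2"
    using RD[OF c3 c2] by auto
  have "\<alpha> * a x2 + \<beta> * (- b x1) = 0" using e1 e2 za zb by (simp add: algebra_simps)
  hence "a x2 = 0" using indep_zero[OF ind] by (metis of_real_minus)
  thus ?thesis using e2 zb by simp
qed

lemma phi0: "\<phi> (\<lambda>x. 0) = 0"
  using Z[of "\<lambda>x. 0"] by auto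

lemma scaling:
  fixes w :: "'a \<Rightarrow> real" and l \<zeta> :: complex
  assumes cw: "continuous_map X euclidean w" and \<zeta>: "\<zeta> \<noteq> 0"
    and z: "\<phi> (\<lambda>x. \<zeta> * w x) = 0"
  shows "\<phi> (\<lambda>x. l * w x) = 0"
proof -
  have step1: "\<phi> (\<lambda>x. \<gamma> * w x) = 0" if g: "Im (\<gamma> * cnj \<zeta>) \<noteq> 0" for \<gamma> :: complex
  proof -
    have "Im (\<gamma> * cnj (\<zeta> - \<gamma>)) = Im (\<gamma> * cnj \<zeta>)"
      by (simp add: algebra_simps)
    hence ind: "Im (\<gamma> * cnj (\<zeta> - \<gamma>)) \<noteq> 0" using g by simp
    have "(\<lambda>x. \<gamma> * w x + (\<zeta> - \<gamma>) * w x) = (\<lambda>x. \<zeta> * w x)" by (simp add: algebra_simps)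
    thus ?thesis using oblique[OF cw cw ind] z by simp
  qed
  show ?thesis
  proof (cases "l = 0")
    case True thus ?thesis using phi0 by simp
  next
    case False
    show ?thesis
    proof (cases "Im (l * cnj \<zeta>) = 0")
      case False thus ?thesis using step1 by blast
    next
      case True
      define r where "r = Re (l * cnj \<zeta>)"
      have lr: "l * cnj \<zeta> = r" using True by (simp add: r_def complex_eq_iff)
      have "r \<noteq> 0"
      proof
        assume "r = 0" with lr have "l * cnj \<zeta> = 0" by simp
        thus False using \<open>l \<noteq> 0\<close> \<zeta> by simp
      qed
      have i1: "Im (\<i> * l * cnj \<zeta>) \<noteq> 0" using lr \<open>r \<noteq> 0\<close> by (simp add: mult.assoc)
      have i2: "Im ((1 - \<i>) * l * cnj \<zeta>) \<noteq> 0" using lr \<open>r \<noteq> 0\<close> by (simp add: mult.assoc)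
      have ind: "Im ((\<i> * l) * cnj ((1 - \<i>) * l)) \<noteq> 0"
      proof -
        have "(\<i> * l) * cnj ((1 - \<i>) * l) = (\<i> - 1) * (l * cnj l)" by (simp add: algebra_simps)
        also have "l * cnj l = (complex_of_real (cmod l))^2" using complex_norm_square[of l] by simp
        finally show ?thesis using \<open>l \<noteq> 0\<close> by simp
      qed
      have "\<phi> (\<lambda>x. (\<i> * l) * w x + ((1 - \<i>) * l) * w x) = 0"
        using linesum[OF cw cw ind] step1[OF i1] step1[OF i2] by (simp add: mult.assoc)
      moreover have "(\<lambda>x. (\<i> * l) * w x + ((1 - \<i>) * l) * w x) = (\<lambda>x. l * w x)"
        by (simp add: algebra_simps)
      ultimately show ?thesis by simp
    qed
  qed
qed

lemma translate:
  assumes cf: "continuous_map X euclidean f"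
  shows "\<phi> (\<lambda>x. f x + c) = \<phi> f + c"
proof -
  have "continuous_map X euclidean (\<lambda>x. f x + c)" by (intro continuous_map_add cf continuous_map_const[THEN iffD2]) simp
  from RD[OF this cf] have "\<phi> (\<lambda>x. f x + c) - \<phi> f = c" by auto
  thus ?thesis by (metis add.commute diff_add_cancel)
qed

lemma homog0:
  assumes cf: "continuous_map X euclidean f" and z: "\<phi> f = 0"
  shows "\<phi> (\<lambda>x. l * f x) = 0"
proof -
  define u where "u = (\<lambda>x. Re (f x))"
  define v where "v = (\<lambda>x. Im (f x))"
  have cu: "continuous_map X euclidean u" unfolding u_def by (rule cm_Re[OF cf])
  have cv: "continuous_map X euclidean v" unfolding v_def by (rule cm_Im[OF cf])
  have fe: "f = (\<lambda>x. 1 * complex_of_real (u x) + \<i> * complex_of_real (v x))"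
    by (auto simp: u_def v_def complex_eq_iff)
  have fe2: "f = (\<lambda>x. \<i> * complex_of_real (v x) + 1 * complex_of_real (u x))"
    by (auto simp: u_def v_def complex_eq_iff)
  have z1: "\<phi> (\<lambda>x. 1 * complex_of_real (u x) + \<i> * complex_of_real (v x)) = 0"
    using z fe by simp
  have "\<phi> (\<lambda>x. 1 * complex_of_real (u x)) = 0"
    by (rule oblique[OF cu cv _ z1]) simp
  hence zu: "\<phi> (\<lambda>x. l * complex_of_real (u x)) = 0"
    by (rule scaling[OF cu, rotated]) simp
  have z2: "\<phi> (\<lambda>x. \<i> * complex_of_real (v x) + 1 * complex_of_real (u x)) = 0"
    using z fe2 by simp
  have "\<phi> (\<lambda>x. \<i> * complex_of_real (v x)) = 0"
    by (rule oblique[OF cv cu _ z2]) simp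
  hence zv: "\<phi> (\<lambda>x. (l * \<i>) * complex_of_real (v x)) = 0"
    by (rule scaling[OF cv, rotated]) simp
  show ?thesis
  proof (cases "l = 0")
    case True thus ?thesis using phi0 by simp
  next
    case False
    have ind: "Im (l * cnj (l * \<i>)) \<noteq> 0"
    proof -
      have "Im (l * cnj (l * \<i>)) = -((Re l)^2 + (Im l)^2)" by (simp add: power2_eq_square)
      moreover have "(Re l)^2 + (Im l)^2 > 0" using \<open>l \<noteq> 0\<close> complex_neq_0 by blast
      ultimately show ?thesis by simp
    qed
    have "\<phi> (\<lambda>x. l * complex_of_real (u x) + (l * \<i>) * complex_of_real (v x)) = 0"
      by (rule linesum[OF cu cv ind zu zv])
    moreover have "(\<lambda>x. l * complex_of_real (u x) + (l * \<i>) * complex_of_real (v x)) = (\<lambda>x. l * f x)"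
      by (rule ext) (simp add: u_def v_def complex_eq_iff algebra_simps)
    ultimately show ?thesis by simp
  qed
qed

lemma homog:
  assumes cf: "continuous_map X euclidean f"
  shows "\<phi> (\<lambda>x. l * f x) = l * \<phi> f"
proof -
  have c1: "continuous_map X euclidean (\<lambda>x. f x + - \<phi> f)" by (intro continuous_map_add cf continuous_map_const[THEN iffD2]) simp
  have "\<phi> (\<lambda>x. f x + - \<phi> f) = \<phi> f + - \<phi> f" by (rule translate[OF cf])
  hence "\<phi> (\<lambda>x. f x + - \<phi> f) = 0" by simp
  hence "\<phi> (\<lambda>x. l * (f x + - \<phi> f)) = 0" by (rule homog0[OF c1])
  moreover have c2: "continuous_map X euclidean (\<lambda>x. l * f x)" by (rule cm_cmult[OF cf])
  have "\<phi> (\<lambda>x. l * (f x + - \<phi> f)) = \<phi> (\<lambda>x. l * f x) + - (l * \<phi> f)"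
    using translate[OF c2, of "- (l * \<phi> f)"] by (simp add: algebra_simps)
  ultimately show ?thesis by simp
qed

end
lemma cont_tensor:
  fixes sc :: "complex \<Rightarrow> 'e::ab_group_add \<Rightarrow> 'e"
  assumes lc: "locally_convex sc P" and Pne: "P \<noteq> {}"
    and cf: "continuous_map X euclidean (f::'a \<Rightarrow> complex)"
  shows "continuous_map X (lc_topology P) (\<lambda>x. sc (f x) u)"
proof -
  interpret vs: vector_space sc using lc unfolding locally_convex_def by auto
  have sn: "\<And>p. p \<in> P \<Longrightarrow> cseminorm sc p" using lc unfolding locally_convex_def by auto
  have p0: "p 0 = 0" if "p \<in> P" for p
  proof -
    have "p (sc 0 0) = cmod 0 * p 0" using sn[OF that] unfolding cseminorm_def by blast
    thus ?thesis by simp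
  qed
  show ?thesis
    unfolding lc_topology_def
  proof (rule continuous_on_generated_topo)
    fix U assume "U \<in> {{y. p (y - x) < r} | p x r. p \<in> P \<and> r > 0}"
    then obtain p z r where U: "U = {y. p (y - z) < r}" and pP: "p \<in> P" by blast
    have tri: "p (a + b) \<le> p a + p b" for a b using sn[OF pP] unfolding cseminorm_def by auto
    have hom: "p (sc c a) = cmod c * p a" for c a using sn[OF pP] unfolding cseminorm_def by auto
    define h where "h = (\<lambda>c. p (sc c u - z))"
    have lip: "dist (h c) (h d) \<le> p u * dist c d" for c d
    proof -
      have e: "sc c u - z - (sc d u - z) = sc (c - d) u" for c d by (simp add: vs.scale_left_diff_distrib)
      have 1: "h c \<le> h d + cmod (c - d) * p u" for c d
      proof -
        have "h c = p ((sc c u - z - (sc d u - z)) + (sc d u - z))" by (simp add: h_def)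
        also have "\<dots> \<le> p (sc c u - z - (sc d u - z)) + p (sc d u - z)" by (rule tri)
        also have "\<dots> = cmod (c - d) * p u + h d" by (simp only: e hom h_def)
        finally show ?thesis by simp
      qed
      have "h c \<le> h d + cmod (c - d) * p u" "h d \<le> h c + cmod (d - c) * p u" by (rule 1)+
      moreover have "cmod (d - c) = cmod (c - d)" by (rule norm_minus_commute)
      ultimately have "\<bar>h c - h d\<bar> \<le> p u * cmod (c - d)" by (simp add: abs_le_iff mult.commute)
      thus ?thesis by (simp add: dist_real_def dist_norm)
    qed
    have pu: "0 \<le> p u" using sn[OF pP] unfolding cseminorm_def by auto
    have "continuous_on UNIV h"
      by (rule lipschitz_on_continuous_on[of "p u"]) (rule lipschitz_onI, use lip pu in auto)
    hence ch: "continuous_map euclidean euclidean h" by simp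
    have cg: "continuous_map X euclidean (\<lambda>x. h (f x))"
      using continuous_map_compose[OF cf ch] by (simp add: o_def)
    have "openin X {x \<in> topspace X. h (f x) \<in> {..<r}}"
      by (rule openin_continuous_map_preimage[OF cg]) simp
    moreover have "(\<lambda>x. sc (f x) u) -` U \<inter> topspace X = {x \<in> topspace X. h (f x) \<in> {..<r}}"
      by (auto simp: U h_def)
    ultimately show "openin X ((\<lambda>x. sc (f x) u) -` U \<inter> topspace X)" by simp
  next
    obtain p where pP: "p \<in> P" using Pne by auto
    show "(\<lambda>x. sc (f x) u) ` topspace X \<subseteq> \<Union> {{y. p (y - x) < r} | p x r. p \<in> P \<and> r > 0}"
    proof
      fix y assume "y \<in> (\<lambda>x. sc (f x) u) ` topspace X"
      have "y \<in> {y'. p (y' - y) < 1}" using p0[OF pP] by simp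
      moreover have "{y'. p (y' - y) < 1} \<in> {{y. p (y - x) < r} | p x r. p \<in> P \<and> r > 0}"
        by (rule CollectI, rule exI[of _ p], rule exI[of _ y], rule exI[of _ 1]) (simp add: pP)
      ultimately show "y \<in> \<Union> {{y. p (y - x) < r} | p x r. p \<in> P \<and> r > 0}" by (rule UnionI[rotated])
    qed
  qed
qed

theorem lemma4p5:
  fixes X :: "'a topology" and Y :: "'b topology"
    and sc :: "complex \<Rightarrow> 'e::ab_group_add \<Rightarrow> 'e" and P :: "('e \<Rightarrow> real) set"
    and T :: "('a \<Rightarrow> 'e) \<Rightarrow> ('b \<Rightarrow> 'e)"
  assumes "compact_space X" "Hausdorff_space X" "topspace X \<noteq> {}"
    and "compact_space Y" "Hausdorff_space Y" "topspace Y \<noteq> {}"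
    and "locally_convex sc P" and "\<exists>e::'e. e \<noteq> 0"
    and "\<And>F. continuous_map X (lc_topology P) F \<Longrightarrow> continuous_map Y (lc_topology P) (T F)"
    and "\<And>F G. continuous_map X (lc_topology P) F \<Longrightarrow> continuous_map X (lc_topology P) G
           \<Longrightarrow> Ran Y (\<lambda>y. T F y - T G y) \<subseteq> Ran X (\<lambda>x. F x - G x)"
    and "\<forall>y\<in>topspace Y. T (\<lambda>x. 0) y = 0"
    and "u \<noteq> 0" and "v \<noteq> 0"
  shows "\<forall>f. continuous_map X euclidean f \<longrightarrow>
           (\<forall>y\<in>topspace Y. Ttilde sc T u f y = Ttilde sc T v f y)"
proof (intro allI impI ballI)
  note lc = assms(7) and RanA = assms(10) and T0 = assms(11)
  interpret vs: vector_space sc using lc unfolding locally_convex_def by auto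
  have Pne: "P \<noteq> {}" using lc assms(8) unfolding locally_convex_def by auto
  have ct: "continuous_map X (lc_topology P) (\<lambda>x. sc (g x) w)" if "continuous_map X euclidean g" for g w
    by (rule cont_tensor[OF lc Pne that])
  have c0: "continuous_map X (lc_topology P) (\<lambda>x. 0)"
    using ct[of "\<lambda>x. 0" 0] by simp
  have rep: "\<exists>x\<in>topspace X. T (\<lambda>x. sc (g x) w) y = sc (g x) w"
    if "continuous_map X euclidean g" "y \<in> topspace Y" for g w y
  proof -
    have "T (\<lambda>x. sc (g x) w) y - T (\<lambda>x. 0) y \<in> Ran Y (\<lambda>y. T (\<lambda>x. sc (g x) w) y - T (\<lambda>x. 0) y)"
      using that(2) unfolding Ran_def by blast
    also have "\<dots> \<subseteq> Ran X (\<lambda>x. sc (g x) w - 0)" by (rule RanA[OF ct[OF that(1)] c0])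
    finally show ?thesis using T0 that(2) unfolding Ran_def by auto
  qed
  have tt: "Ttilde sc T w g y = c" if "w \<noteq> 0" "T (\<lambda>x. sc (g x) w) y = sc c w" for w g y c
    unfolding Ttilde_def using that by (auto intro!: the_equality)
  have TT: "T (\<lambda>x. sc (g x) w) y = sc (Ttilde sc T w g y) w"
    if h1: "w \<noteq> 0" and h2: "continuous_map X euclidean g" and h3: "y \<in> topspace Y" for w g y
  proof -
    obtain x where e: "T (\<lambda>x. sc (g x) w) y = sc (g x) w" using rep[OF h2 h3] by blast
    have "Ttilde sc T w g y = g x" by (rule tt[OF h1 e])
    thus ?thesis using e by simp
  qed
  have isrd: "rd X (\<lambda>g. Ttilde sc T w g y)" if w0: "w \<noteq> 0" and y0: "y \<in> topspace Y" for w y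
  proof
    fix f g :: "'a \<Rightarrow> complex"
    assume cf: "continuous_map X euclidean f" and cg: "continuous_map X euclidean g"
    have "T (\<lambda>x. sc (f x) w) y - T (\<lambda>x. sc (g x) w) y \<in> Ran Y (\<lambda>y. T (\<lambda>x. sc (f x) w) y - T (\<lambda>x. sc (g x) w) y)"
      using y0 unfolding Ran_def by blast
    also have "\<dots> \<subseteq> Ran X (\<lambda>x. sc (f x) w - sc (g x) w)" by (rule RanA[OF ct[OF cf] ct[OF cg]])
    finally obtain x where x: "x \<in> topspace X"
      and e: "T (\<lambda>x. sc (f x) w) y - T (\<lambda>x. sc (g x) w) y = sc (f x) w - sc (g x) w"
      unfolding Ran_def by auto
    have "sc (Ttilde sc T w f y - Ttilde sc T w g y) w = sc (f x - g x) w"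
      using e TT[OF w0 cf y0] TT[OF w0 cg y0] by (simp add: vs.scale_left_diff_distrib)
    thus "\<exists>x\<in>topspace X. Ttilde sc T w f y - Ttilde sc T w g y = f x - g x"
      using x w0 by auto
  next
    fix f :: "'a \<Rightarrow> complex"
    assume cf: "continuous_map X euclidean f"
    obtain x where "x \<in> topspace X" "T (\<lambda>x. sc (f x) w) y = sc (f x) w" using rep[OF cf y0] by blast
    thus "\<exists>x\<in>topspace X. Ttilde sc T w f y = f x" using tt[OF w0] by auto
  qed
  fix f :: "'a \<Rightarrow> complex" and y
  assume cf: "continuous_map X euclidean f" and y: "y \<in> topspace Y"
  define a where "a = Ttilde sc T u f y"
  define b where "b = Ttilde sc T v f y"
  have Ta: "T (\<lambda>x. sc (f x) u) y = sc a u" using TT[OF assms(12) cf y] by (simp add: a_def)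
  have Tb: "T (\<lambda>x. sc (f x) v) y = sc b v" using TT[OF assms(13) cf y] by (simp add: b_def)
  have "T (\<lambda>x. sc (f x) u) y - T (\<lambda>x. sc (f x) v) y \<in> Ran Y (\<lambda>y. T (\<lambda>x. sc (f x) u) y - T (\<lambda>x. sc (f x) v) y)"
    using y unfolding Ran_def by blast
  also have "\<dots> \<subseteq> Ran X (\<lambda>x. sc (f x) u - sc (f x) v)" by (rule RanA[OF ct[OF cf] ct[OF cf]])
  finally obtain x where "sc a u - sc b v = sc (f x) u - sc (f x) v"
    unfolding Ran_def Ta Tb by auto
  define c where "c = f x"
  have eq: "sc (a - c) u = sc (b - c) v"
    using \<open>sc a u - sc b v = sc (f x) u - sc (f x) v\<close>
    by (simp add: c_def vs.scale_left_diff_distrib algebra_simps)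
  show "Ttilde sc T u f y = Ttilde sc T v f y"
  proof (cases "a = c")
    case True
    hence "sc (b - c) v = 0" using eq by simp
    hence "b = c" using assms(13) by simp
    thus ?thesis using True by (simp add: a_def b_def)
  next
    case False
    define \<mu> where "\<mu> = (b - c) / (a - c)"
    have uv: "u = sc \<mu> v"
    proof -
      have "u = sc (inverse (a - c)) (sc (a - c) u)" using False by simp
      also have "\<dots> = sc \<mu> v" using eq by (simp add: \<mu>_def divide_inverse mult.commute)
      finally show ?thesis .
    qed
    have "\<mu> \<noteq> 0" using uv assms(12) by auto
    have fu: "(\<lambda>x. sc (f x) u) = (\<lambda>x. sc (\<mu> * f x) v)" by (simp add: uv mult.commute)
    have cmf: "continuous_map X euclidean (\<lambda>x. \<mu> * f x)" by (rule cm_cmult[OF cf])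
    interpret r: rd X "\<lambda>g. Ttilde sc T v g y" by (rule isrd[OF assms(13) y])
    have "sc a u = sc (Ttilde sc T v (\<lambda>x. \<mu> * f x) y) v"
      using Ta TT[OF assms(13) cmf y] fu by simp
    also have "Ttilde sc T v (\<lambda>x. \<mu> * f x) y = \<mu> * b" using r.homog[OF cf] by (simp add: b_def)
    finally have "sc (a * \<mu>) v = sc (\<mu> * b) v" by (simp add: uv)
    hence "a * \<mu> = \<mu> * b" using assms(13) by simp
    hence "a = b" using \<open>\<mu> \<noteq> 0\<close> by (simp add: mult.commute)
    thus ?thesis by (simp add: a_def b_def)
  qed
qed

end
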